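(* $\mathcal K\big(\boldsymbol\zeta(n)\big)=\mathbb{C}[M_{n,n}]^{ad_{gl(n)}}$, where $\boldsymbol\zeta(n)$ is the center of $\mathbf{U}(gl(n))$ and $\mathbb{C}[M_{n,n}]^{ad_{gl(n)}}=\{\mathbf p\in\mathbb{C}[M_{n,n}]:(D^l_{ij}-D^r_{ji})(\mathbf p)=0\ \text{for all } i,j\}$.
   Context: $\mathbb{C}[M_{n,n}]$: polynomial algebra in commuting indeterminates $(i|j)$, $1\le i,j\le n$. $D^l_{ij}$ is the derivation of $\mathbb{C}[M_{n,n}]$ with $D^l_{ij}((a|b))=\delta_{ja}(i|b)$; $D^r_{ji}$ is the derivation with $D^r_{ji}((a|b))=\delta_{ib}(a|j)$. Koszul map: $\rho_{ij}=D^l_{ij}+$ multiplication by $(i|j)$; $\tau:\mathbf{U}(gl(n))\to\mathrm{End}(\mathbb{C}[M_{n,n}])$ the algebra morphism with $\tau(e_{ij})=\rho_{ij}$; $\mathcal K(\mathbf P)=\tau(\mathbf P)(1)$ (a linear bijection $\mathbf{U}(gl(n))\to\mathbb{C}[M_{n,n}]$). *)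

theory Defs
  imports Complex_Main "HOL-Library.Poly_Mapping"
begin

text \<open>Variables are index pairs (a,b), standing for (a|b); monomials are
finitely supported exponent maps; polynomials are finitely supported
coefficient maps (product = convolution, from HOL-Library.Poly_Mapping).\<close>

type_synonym cpoly = "((nat \<times> nat) \<Rightarrow>\<^sub>0 nat) \<Rightarrow>\<^sub>0 complex"

definition X :: "nat \<Rightarrow> nat \<Rightarrow> cpoly" where
  "X a b = Poly_Mapping.single (Poly_Mapping.single (a, b) 1) 1"

definition cconst :: "complex \<Rightarrow> cpoly" where
  "cconst c = Poly_Mapping.single 0 c"

definition CM :: "nat \<Rightarrow> cpoly set" where
  "CM n = Collect (\<lambda>p. \<forall>m \<in> Poly_Mapping.keys p. Poly_Mapping.keys m \<subseteq> {1..n} \<times> {1..n})"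

definition pd :: "nat \<times> nat \<Rightarrow> cpoly \<Rightarrow> cpoly" where
  "pd v p = (\<Sum>m \<in> Poly_Mapping.keys p. if 0 < Poly_Mapping.lookup m v
      then Poly_Mapping.single (m - Poly_Mapping.single v 1)
             (of_nat (Poly_Mapping.lookup m v) * Poly_Mapping.lookup p m)
      else 0)"

text \<open>D^l_{ij}: the derivation with D^l_{ij}((a|b)) = delta_{ja} (i|b).\<close>
definition Dl :: "nat \<Rightarrow> nat \<Rightarrow> nat \<Rightarrow> cpoly \<Rightarrow> cpoly" where
  "Dl n i j p = (\<Sum>b \<in> {1..n}. X i b * pd (j, b) p)"

text \<open>D^r_{ji}: the derivation with D^r_{ji}((a|b)) = delta_{ib} (a|j).\<close>
definition Dr :: "nat \<Rightarrow> nat \<Rightarrow> nat \<Rightarrow> cpoly \<Rightarrow> cpoly" where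
  "Dr n j i p = (\<Sum>a \<in> {1..n}. X a j * pd (a, i) p)"

definition rho :: "nat \<Rightarrow> nat \<Rightarrow> nat \<Rightarrow> cpoly \<Rightarrow> cpoly" where
  "rho n i j p = Dl n i j p + X i j * p"

definition Inv :: "nat \<Rightarrow> cpoly set" where
  "Inv n = {p \<in> CM n. \<forall>i \<in> {1..n}. \<forall>j \<in> {1..n}. Dl n i j p - Dr n j i p = 0}"

text \<open>Free associative algebra on letters (i,j) (standing for e_{ij}):
finitely supported maps from words to coefficients.\<close>

type_synonym fword = "(nat \<times> nat) list \<Rightarrow>\<^sub>0 complex"

definition fmul :: "fword \<Rightarrow> fword \<Rightarrow> fword" where
  "fmul p q = (\<Sum>u \<in> Poly_Mapping.keys p. \<Sum>w \<in> Poly_Mapping.keys q.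
       Poly_Mapping.single (u @ w) (Poly_Mapping.lookup p u * Poly_Mapping.lookup q w))"

definition E :: "nat \<Rightarrow> nat \<Rightarrow> fword" where
  "E i j = Poly_Mapping.single [(i, j)] 1"

definition kdelta :: "nat \<Rightarrow> nat \<Rightarrow> complex" where
  "kdelta a b = (if a = b then 1 else 0)"

definition Fr :: "nat \<Rightarrow> fword set" where
  "Fr n = Collect (\<lambda>p. \<forall>u \<in> Poly_Mapping.keys p. set u \<subseteq> {1..n} \<times> {1..n})"

definition glrel :: "nat \<Rightarrow> nat \<Rightarrow> nat \<Rightarrow> nat \<Rightarrow> fword" where
  "glrel i j k l = fmul (E i j) (E k l) - fmul (E k l) (E i j)
     - (fmul (Poly_Mapping.single [] (kdelta j k)) (E i l)
        - fmul (Poly_Mapping.single [] (kdelta l i)) (E k j))"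

inductive_set UIdeal :: "nat \<Rightarrow> fword set" for n where
  zero: "0 \<in> UIdeal n"
| add: "p \<in> UIdeal n \<Longrightarrow> q \<in> UIdeal n \<Longrightarrow> p + q \<in> UIdeal n"
| gen: "a \<in> Fr n \<Longrightarrow> b \<in> Fr n \<Longrightarrow> i \<in> {1..n} \<Longrightarrow> j \<in> {1..n} \<Longrightarrow>
        k \<in> {1..n} \<Longrightarrow> l \<in> {1..n} \<Longrightarrow>
        fmul a (fmul (glrel i j k l) b) \<in> UIdeal n"

text \<open>Representatives of the center zeta(n) of U(gl(n)) = Fr n / UIdeal n:
P is central iff [e_ij, P] lies in the ideal for all generators.\<close>
definition Center :: "nat \<Rightarrow> fword set" where
  "Center n = {P \<in> Fr n. \<forall>i \<in> {1..n}. \<forall>j \<in> {1..n}.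
      fmul (E i j) P - fmul P (E i j) \<in> UIdeal n}"

fun rho_word :: "nat \<Rightarrow> (nat \<times> nat) list \<Rightarrow> cpoly \<Rightarrow> cpoly" where
  "rho_word n [] f = f"
| "rho_word n (x # xs) f = rho n (fst x) (snd x) (rho_word n xs f)"

definition tau :: "nat \<Rightarrow> fword \<Rightarrow> cpoly \<Rightarrow> cpoly" where
  "tau n P f = (\<Sum>u \<in> Poly_Mapping.keys P. cconst (Poly_Mapping.lookup P u) * rho_word n u f)"

definition Koszul :: "nat \<Rightarrow> fword \<Rightarrow> cpoly" where
  "Koszul n P = tau n P 1"

end

theory Submission
  imports Defs "HOL-Library.Product_Lexorder" "HOL-Library.Multiset"
begin

instantiation list :: (type) monoid_add
begin
definition plus_list :: "'a list \<Rightarrow> 'a list \<Rightarrow> 'a list" where "plus_list u w = u @ w"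
definition zero_list :: "'a list" where "zero_list = []"
instance by standard (auto simp: plus_list_def zero_list_def)
end

lemma lookup_minus_nat:
  "Poly_Mapping.lookup (m - n) k = Poly_Mapping.lookup m k - Poly_Mapping.lookup (n :: 'a \<Rightarrow>\<^sub>0 nat) k"
  by (simp add: minus_poly_mapping.rep_eq)

lemma poly_expand:
  "p = (\<Sum>k\<in>Poly_Mapping.keys p. Poly_Mapping.single k (Poly_Mapping.lookup p k))"
proof (rule poly_mapping_eqI)
  fix x
  have "Poly_Mapping.lookup (\<Sum>k\<in>Poly_Mapping.keys p. Poly_Mapping.single k (Poly_Mapping.lookup p k)) x
      = (\<Sum>k\<in>Poly_Mapping.keys p. (if k = x then Poly_Mapping.lookup p k else 0))"
    by (simp add: lookup_sum lookup_single when_def)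
  also have "\<dots> = Poly_Mapping.lookup p x"
    by (simp add: sum.delta in_keys_iff)
  finally show "Poly_Mapping.lookup p x = Poly_Mapping.lookup (\<Sum>k\<in>Poly_Mapping.keys p. Poly_Mapping.single k (Poly_Mapping.lookup p k)) x" by simp
qed

lemma additive_zero:
  fixes F :: "'a::comm_monoid_add \<Rightarrow> 'b::ab_group_add"
  assumes "\<And>x y. F (x + y) = F x + F y"
  shows "F 0 = 0"
proof -
  have "F 0 = F 0 + F 0" using assms[of 0 0] by simp
  then show ?thesis by (metis add_cancel_right_right)
qed

lemma additive_sum:
  fixes F :: "'a::comm_monoid_add \<Rightarrow> 'b::ab_group_add"
  assumes add: "\<And>x y. F (x + y) = F x + F y"
  shows "F (sum g A) = (\<Sum>a\<in>A. F (g a))"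
proof (cases "finite A")
  case True then show ?thesis
  proof (induction A rule: finite_induct)
    case empty then show ?case using additive_zero[of F, OF add] by simp
  next
    case (insert x A) then show ?case by (simp add: add)
  qed
next
  case False then show ?thesis using additive_zero[of F, OF add] by simp
qed

lemma additive_expand:
  fixes F :: "('a \<Rightarrow>\<^sub>0 'c::comm_monoid_add) \<Rightarrow> 'b::ab_group_add"
  assumes "\<And>x y. F (x + y) = F x + F y"
  shows "F p = (\<Sum>k\<in>Poly_Mapping.keys p. F (Poly_Mapping.single k (Poly_Mapping.lookup p k)))"
proof -
  have "F p = F (\<Sum>k\<in>Poly_Mapping.keys p. Poly_Mapping.single k (Poly_Mapping.lookup p k))"
    by (subst poly_expand[of p]) (rule refl)
  also have "\<dots> = (\<Sum>k\<in>Poly_Mapping.keys p. F (Poly_Mapping.single k (Poly_Mapping.lookup p k)))"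
    by (rule additive_sum[OF assms])
  finally show ?thesis .
qed

lemma additive_eq:
  fixes F G :: "('a \<Rightarrow>\<^sub>0 'c::comm_monoid_add) \<Rightarrow> 'b::ab_group_add"
  assumes "\<And>x y. F (x + y) = F x + F y" "\<And>x y. G (x + y) = G x + G y"
    and "\<And>k c. F (Poly_Mapping.single k c) = G (Poly_Mapping.single k c)"
  shows "F p = G p"
proof -
  have "F p = (\<Sum>k\<in>Poly_Mapping.keys p. F (Poly_Mapping.single k (Poly_Mapping.lookup p k)))"
    by (rule additive_expand[OF assms(1)])
  also have "\<dots> = (\<Sum>k\<in>Poly_Mapping.keys p. G (Poly_Mapping.single k (Poly_Mapping.lookup p k)))"
    using assms(3) by simp
  also have "\<dots> = G p" by (rule additive_expand[OF assms(2), symmetric])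
  finally show ?thesis .
qed

definition ev :: "nat \<times> nat \<Rightarrow> (nat \<times> nat) \<Rightarrow>\<^sub>0 nat" where
  "ev v = Poly_Mapping.single v 1"

lemma lookup_ev: "Poly_Mapping.lookup (ev v) w = (if v = w then 1 else 0)"
  by (simp add: ev_def lookup_single when_def)

lemma mono_eqI: "(\<And>w. Poly_Mapping.lookup (a::(nat\<times>nat) \<Rightarrow>\<^sub>0 nat) w = Poly_Mapping.lookup b w) \<Longrightarrow> a = b"
  by (rule poly_mapping_eqI) simp

lemma cconst_mult_map: "cconst c * f = Poly_Mapping.map ((*) c) f"
  by (simp add: cconst_def mult_map_scale_conv_mult)

lemma lookup_cconst_mult: "Poly_Mapping.lookup (cconst c * f) m = c * Poly_Mapping.lookup f m"
  by (simp add: cconst_mult_map map.rep_eq when_def)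

lemma X_mult_expand:
  "X a b * f = (\<Sum>k\<in>Poly_Mapping.keys f. Poly_Mapping.single (ev (a,b) + k) (Poly_Mapping.lookup f k))"
proof -
  have "X a b * f = X a b * (\<Sum>k\<in>Poly_Mapping.keys f. Poly_Mapping.single k (Poly_Mapping.lookup f k))"
    by (subst poly_expand[of f]) simp
  also have "\<dots> = (\<Sum>k\<in>Poly_Mapping.keys f. Poly_Mapping.single (ev (a,b) + k) (Poly_Mapping.lookup f k))"
    by (simp add: sum_distrib_left X_def mult_single ev_def)
  finally show ?thesis .
qed

lemma ev_add_eq_iff:
  "(ev v + k = m) = (0 < Poly_Mapping.lookup m v \<and> k = m - ev v)"
proof
  assume h: "ev v + k = m"
  have "0 < Poly_Mapping.lookup m v" unfolding h[symmetric] by (simp add: lookup_add lookup_ev)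
  moreover have "k = m - ev v"
    by (rule mono_eqI) (simp add: h[symmetric] lookup_add lookup_ev lookup_minus_nat)
  ultimately show "0 < Poly_Mapping.lookup m v \<and> k = m - ev v" by simp
next
  assume h: "0 < Poly_Mapping.lookup m v \<and> k = m - ev v"
  show "ev v + k = m"
  proof (rule mono_eqI)
    fix x show "Poly_Mapping.lookup (ev v + k) x = Poly_Mapping.lookup m x"
      using h by (cases "v = x") (auto simp: lookup_add lookup_ev lookup_minus_nat)
  qed
qed

lemma lookup_X_mult:
  "Poly_Mapping.lookup (X a b * f) m = (if 0 < Poly_Mapping.lookup m (a,b) then Poly_Mapping.lookup f (m - ev (a,b)) else 0)"
proof -
  have "Poly_Mapping.lookup (X a b * f) m =
     (\<Sum>k\<in>Poly_Mapping.keys f. (if k = m - ev (a,b) \<and> 0 < Poly_Mapping.lookup m (a,b) then Poly_Mapping.lookup f k else 0))"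
    unfolding X_mult_expand lookup_sum
    by (rule sum.cong) (auto simp: lookup_single when_def ev_add_eq_iff)
  also have "\<dots> = (if 0 < Poly_Mapping.lookup m (a,b) then Poly_Mapping.lookup f (m - ev (a,b)) else 0)"
    by (cases "0 < Poly_Mapping.lookup m (a,b)") (simp_all add: sum.delta' in_keys_iff)
  finally show ?thesis .
qed

lemma ev_minus_eq_iff:
  "(0 < Poly_Mapping.lookup k v \<and> k - ev v = m) = (k = m + ev v)"
  using ev_add_eq_iff[of v m k] by (auto simp: add.commute)

lemma lookup_pd_term:
  "Poly_Mapping.lookup (if 0 < Poly_Mapping.lookup k v then Poly_Mapping.single (k - Poly_Mapping.single v 1) c else 0) m
    = (if k = m + ev v then c else 0)"
proof -
  have e: "(0 < Poly_Mapping.lookup k v \<and> k - ev v = m) = (k = m + ev v)" by (rule ev_minus_eq_iff)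
  show ?thesis
  proof (cases "0 < Poly_Mapping.lookup k v")
    case True then show ?thesis using e by (auto simp: lookup_single when_def ev_def)
  next
    case False then show ?thesis using e by auto
  qed
qed

lemma lookup_pd:
  "Poly_Mapping.lookup (pd v p) m = of_nat (Poly_Mapping.lookup m v + 1) * Poly_Mapping.lookup p (m + ev v)"
proof -
  have "Poly_Mapping.lookup (pd v p) m =
     (\<Sum>k\<in>Poly_Mapping.keys p. (if k = m + ev v then of_nat (Poly_Mapping.lookup k v) * Poly_Mapping.lookup p k else 0))"
    unfolding pd_def lookup_sum lookup_pd_term by (rule sum.cong) auto
  also have "\<dots> = of_nat (Poly_Mapping.lookup m v + 1) * Poly_Mapping.lookup p (m + ev v)"
    by (simp add: sum.delta' in_keys_iff lookup_add lookup_ev)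
  finally show ?thesis .
qed

lemma mono_diff_add: "0 < Poly_Mapping.lookup k w \<Longrightarrow> k - ev w + ev w = k"
  by (rule mono_eqI) (auto simp: lookup_add lookup_ev lookup_minus_nat)

lemma mono_diff_add_comm: "0 < Poly_Mapping.lookup k w \<Longrightarrow> k - ev w + ev v = k + ev v - ev w"
  by (rule mono_eqI) (auto simp: lookup_add lookup_ev lookup_minus_nat)

lemma pd_add: "pd v (p + q) = pd v p + pd v q"
  by (rule poly_mapping_eqI) (simp add: lookup_pd lookup_add distrib_left)

lemma pd_zero[simp]: "pd v 0 = 0"
  by (rule poly_mapping_eqI) (simp add: lookup_pd)

lemma pd_diff: "pd v (p - q) = pd v p - pd v q"
  by (rule poly_mapping_eqI) (simp add: lookup_pd lookup_minus right_diff_distrib)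

lemma pd_sum: "pd v (sum g A) = (\<Sum>a\<in>A. pd v (g a))"
  by (rule additive_sum) (rule pd_add)

lemma pd_cconst: "pd v (cconst c * f) = cconst c * pd v f"
  by (rule poly_mapping_eqI) (simp add: lookup_pd lookup_cconst_mult)

lemma mono_add_ev_nz: "k + ev v \<noteq> 0"
proof
  assume "k + ev v = 0"
  then have "Poly_Mapping.lookup (k + ev v) v = 0" by simp
  then show False by (simp add: lookup_add lookup_ev)
qed

lemma pd_one[simp]: "pd v 1 = 0"
  by (rule poly_mapping_eqI) (simp add: lookup_pd lookup_one mono_add_ev_nz)

lemma pd_X_mult:
  "pd v (X a b * f) = (if v = (a,b) then f else 0) + X a b * pd v f"
proof (rule poly_mapping_eqI)
  fix k
  show "Poly_Mapping.lookup (pd v (X a b * f)) k = Poly_Mapping.lookup ((if v = (a,b) then f else 0) + X a b * pd v f) k"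
  proof (cases "v = (a,b)")
    case True
    have l1: "Poly_Mapping.lookup (pd v (X a b * f)) k = of_nat (Poly_Mapping.lookup k v + 1) * Poly_Mapping.lookup f k"
      using True by (simp add: lookup_pd lookup_X_mult lookup_add lookup_ev)
    have l2: "Poly_Mapping.lookup (X a b * pd v f) k = of_nat (Poly_Mapping.lookup k v) * Poly_Mapping.lookup f k"
    proof (cases "0 < Poly_Mapping.lookup k (a,b)")
      case c: True
      then show ?thesis using True
        by (simp add: lookup_pd lookup_X_mult lookup_minus_nat lookup_ev mono_diff_add)
    next
      case False
      then show ?thesis using True by (simp add: lookup_X_mult)
    qed
    show ?thesis using True l1 l2 by (simp add: lookup_add distrib_right)
  next
    case False
    then show ?thesis
      by (cases "0 < Poly_Mapping.lookup k (a,b)")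
         (auto simp: lookup_add lookup_pd lookup_X_mult lookup_ev lookup_minus_nat mono_diff_add_comm)
  qed
qed

lemma pd_comm: "pd v (pd w f) = pd w (pd v f)"
proof (rule poly_mapping_eqI)
  fix k
  show "Poly_Mapping.lookup (pd v (pd w f)) k = Poly_Mapping.lookup (pd w (pd v f)) k"
    by (cases "v = w") (auto simp: lookup_pd lookup_add lookup_ev add_ac mult_ac)
qed

lemma Dl_add: "Dl n i j (f + g) = Dl n i j f + Dl n i j g"
  by (simp add: Dl_def pd_add distrib_left sum.distrib)

lemma Dr_add: "Dr n j i (f + g) = Dr n j i f + Dr n j i g"
  by (simp add: Dr_def pd_add distrib_left sum.distrib)

lemma Dl_cconst: "Dl n i j (cconst c * f) = cconst c * Dl n i j f"
  unfolding Dl_def pd_cconst sum_distrib_left by (rule sum.cong) (simp_all add: mult_ac)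

lemma Dr_cconst: "Dr n j i (cconst c * f) = cconst c * Dr n j i f"
  unfolding Dr_def pd_cconst sum_distrib_left by (rule sum.cong) (simp_all add: mult_ac)

lemma Dl_one[simp]: "Dl n i j 1 = 0" by (simp add: Dl_def)
lemma Dr_one[simp]: "Dr n j i 1 = 0" by (simp add: Dr_def)

lemma sum_if_delta: "finite A \<Longrightarrow> (\<Sum>b\<in>A. if b = l \<and> P then g b else 0) = (if l \<in> A \<and> P then g l else 0)"
  by (cases P) (simp_all add: sum.delta')

lemma Dl_X_mult:
  "Dl n i j (X k l * f) = (if j = k \<and> l \<in> {1..n} then X i l * f else 0) + X k l * Dl n i j f"
proof -
  have "Dl n i j (X k l * f) = (\<Sum>b\<in>{1..n}. (if b = l \<and> j = k then X i b * f else 0) + X k l * (X i b * pd (j,b) f))"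
    unfolding Dl_def pd_X_mult by (rule sum.cong) (auto simp: distrib_left mult_ac)
  also have "\<dots> = (if j = k \<and> l \<in> {1..n} then X i l * f else 0) + X k l * Dl n i j f"
    by (simp add: sum.distrib sum_if_delta Dl_def sum_distrib_left conj_commute)
  finally show ?thesis .
qed

lemma Dr_X_mult:
  "Dr n j i (X k l * f) = (if l = i \<and> k \<in> {1..n} then X k j * f else 0) + X k l * Dr n j i f"
proof -
  have "Dr n j i (X k l * f) = (\<Sum>a\<in>{1..n}. (if a = k \<and> l = i then X a j * f else 0) + X k l * (X a j * pd (a,i) f))"
    unfolding Dr_def pd_X_mult by (rule sum.cong) (auto simp: distrib_left mult_ac)
  also have "\<dots> = (if l = i \<and> k \<in> {1..n} then X k j * f else 0) + X k l * Dr n j i f"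
    by (simp add: sum.distrib sum_if_delta Dr_def sum_distrib_left conj_commute)
  finally show ?thesis .
qed

lemma Dl_Dl_expand:
  "Dl n i j (Dl n k l f) = (if j = k then Dl n i l f else 0)
     + (\<Sum>b\<in>{1..n}. \<Sum>c\<in>{1..n}. X i b * X k c * pd (j,b) (pd (l,c) f))"
proof -
  have "Dl n i j (Dl n k l f) = (\<Sum>b\<in>{1..n}. X i b * (\<Sum>c\<in>{1..n}.
        (if c = b \<and> j = k then pd (l,c) f else 0) + X k c * pd (j,b) (pd (l,c) f)))"
    unfolding Dl_def[of n k l] Dl_def[of n i j] pd_sum pd_X_mult pd_sum
    by (intro sum.cong refl arg_cong2[where f="(*)"]) auto
  also have "\<dots> = (\<Sum>b\<in>{1..n}. (if j = k then X i b * pd (l,b) f else 0)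
        + (\<Sum>c\<in>{1..n}. X i b * X k c * pd (j,b) (pd (l,c) f)))"
    by (intro sum.cong refl) (auto simp: sum.distrib sum_if_delta distrib_left sum_distrib_left mult_ac)
  also have "\<dots> = (if j = k then Dl n i l f else 0)
     + (\<Sum>b\<in>{1..n}. \<Sum>c\<in>{1..n}. X i b * X k c * pd (j,b) (pd (l,c) f))"
    by (simp add: sum.distrib Dl_def)
  finally show ?thesis .
qed

lemma Dl_Dl:
  "Dl n i j (Dl n k l f) - Dl n k l (Dl n i j f) = (if j = k then Dl n i l f else 0) - (if l = i then Dl n k j f else 0)"
proof -
  have "(\<Sum>b\<in>{1..n}. \<Sum>c\<in>{1..n}. X i b * X k c * pd (j,b) (pd (l,c) f))
      = (\<Sum>c\<in>{1..n}. \<Sum>b\<in>{1..n}. X k c * X i b * pd (l,c) (pd (j,b) f))"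
    by (subst sum.swap) (simp add: pd_comm mult_ac)
  then show ?thesis by (simp add: Dl_Dl_expand)
qed

lemma Dl_Dr_expand:
  assumes "j \<in> {1..n}" "l \<in> {1..n}"
  shows "Dl n k l (Dr n j i f) = X k j * pd (l,i) f
     + (\<Sum>b\<in>{1..n}. \<Sum>a\<in>{1..n}. X k b * X a j * pd (l,b) (pd (a,i) f))"
proof -
  have "Dl n k l (Dr n j i f) = (\<Sum>b\<in>{1..n}. X k b * (\<Sum>a\<in>{1..n}.
        (if a = l \<and> b = j then pd (a,i) f else 0) + X a j * pd (l,b) (pd (a,i) f)))"
    unfolding Dl_def[of n k l] Dr_def[of n j i] pd_sum pd_X_mult pd_sum
    by (intro sum.cong refl arg_cong2[where f="(*)"]) auto
  also have "\<dots> = (\<Sum>b\<in>{1..n}. (if b = j \<and> True then X k b * pd (l,i) f else 0)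
        + (\<Sum>a\<in>{1..n}. X k b * X a j * pd (l,b) (pd (a,i) f)))"
    using assms by (intro sum.cong refl) (auto simp: sum.distrib sum_if_delta distrib_left sum_distrib_left mult_ac)
  also have "\<dots> = X k j * pd (l,i) f
     + (\<Sum>b\<in>{1..n}. \<Sum>a\<in>{1..n}. X k b * X a j * pd (l,b) (pd (a,i) f))"
    using assms by (simp only: sum.distrib sum_if_delta finite_atLeastAtMost) simp
  finally show ?thesis .
qed

lemma Dr_Dl_expand:
  assumes "i \<in> {1..n}" "k \<in> {1..n}"
  shows "Dr n j i (Dl n k l f) = X k j * pd (l,i) f
     + (\<Sum>a\<in>{1..n}. \<Sum>b\<in>{1..n}. X a j * X k b * pd (a,i) (pd (l,b) f))"
proof -
  have "Dr n j i (Dl n k l f) = (\<Sum>a\<in>{1..n}. X a j * (\<Sum>b\<in>{1..n}.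
        (if b = i \<and> a = k then pd (l,b) f else 0) + X k b * pd (a,i) (pd (l,b) f)))"
    unfolding Dl_def[of n k l] Dr_def[of n j i] pd_sum pd_X_mult pd_sum
    by (intro sum.cong refl arg_cong2[where f="(*)"]) auto
  also have "\<dots> = (\<Sum>a\<in>{1..n}. (if a = k \<and> True then X a j * pd (l,i) f else 0)
        + (\<Sum>b\<in>{1..n}. X a j * X k b * pd (a,i) (pd (l,b) f)))"
    using assms by (intro sum.cong refl) (auto simp: sum.distrib sum_if_delta distrib_left sum_distrib_left mult_ac)
  also have "\<dots> = X k j * pd (l,i) f
     + (\<Sum>a\<in>{1..n}. \<Sum>b\<in>{1..n}. X a j * X k b * pd (a,i) (pd (l,b) f))"
    using assms by (simp only: sum.distrib sum_if_delta finite_atLeastAtMost) simp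
  finally show ?thesis .
qed

lemma Dl_Dr:
  assumes "i \<in> {1..n}" "j \<in> {1..n}" "k \<in> {1..n}" "l \<in> {1..n}"
  shows "Dl n k l (Dr n j i f) = Dr n j i (Dl n k l f)"
proof -
  have "(\<Sum>b\<in>{1..n}. \<Sum>a\<in>{1..n}. X k b * X a j * pd (l,b) (pd (a,i) f))
      = (\<Sum>a\<in>{1..n}. \<Sum>b\<in>{1..n}. X a j * X k b * pd (a,i) (pd (l,b) f))"
    by (subst sum.swap) (simp add: pd_comm mult_ac)
  then show ?thesis using assms by (simp add: Dl_Dr_expand Dr_Dl_expand)
qed

lemma rho_add: "rho n i j (f + g) = rho n i j f + rho n i j g"
  by (simp add: rho_def Dl_add distrib_left)

lemma rho_cconst: "rho n i j (cconst c * f) = cconst c * rho n i j f"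
  by (simp only: rho_def Dl_cconst) (simp add: distrib_left mult.left_commute)

lemma rho_one: "rho n i j 1 = X i j"
  by (simp add: rho_def)

lemma rho_rho:
  assumes "i \<in> {1..n}" "j \<in> {1..n}" "k \<in> {1..n}" "l \<in> {1..n}"
  shows "rho n i j (rho n k l f) - rho n k l (rho n i j f)
     = (if j = k then rho n i l f else 0) - (if l = i then rho n k j f else 0)"
proof -
  have A: "Dl n i j (Dl n k l f) = Dl n k l (Dl n i j f) + ((if j = k then Dl n i l f else 0) - (if l = i then Dl n k j f else 0))"
    using Dl_Dl[of n i j k l f] by (simp add: algebra_simps)
  show ?thesis
    using assms
    by (simp add: rho_def Dl_add Dl_X_mult A distrib_left)
qed

definition Rop :: "nat \<Rightarrow> nat \<Rightarrow> nat \<Rightarrow> cpoly \<Rightarrow> cpoly" where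
  "Rop n i j f = X i j * f + Dr n j i f"

lemma Rop_add: "Rop n i j (f + g) = Rop n i j f + Rop n i j g"
  by (simp add: Rop_def Dr_add distrib_left)

lemma Rop_cconst: "Rop n i j (cconst c * f) = cconst c * Rop n i j f"
  by (simp only: Rop_def Dr_cconst) (simp add: distrib_left mult.left_commute)

lemma Rop_one: "Rop n i j 1 = X i j"
  by (simp add: Rop_def)

lemma rho_Rop:
  assumes "i \<in> {1..n}" "j \<in> {1..n}" "k \<in> {1..n}" "l \<in> {1..n}"
  shows "rho n k l (Rop n i j f) = Rop n i j (rho n k l f)"
  using assms
  by (simp add: rho_def Rop_def Dl_add Dr_add Dl_X_mult Dr_X_mult Dl_Dr distrib_left)

lemma rho_word_add: "rho_word n u (f + g) = rho_word n u f + rho_word n u g"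
  by (induction u) (simp_all add: rho_add)

lemma rho_word_cconst: "rho_word n u (cconst c * f) = cconst c * rho_word n u f"
  by (induction u) (simp_all add: rho_cconst)

lemma rho_word_append: "rho_word n (u @ w) f = rho_word n u (rho_word n w f)"
  by (induction u) simp_all

lemma rho_word_Rop:
  assumes "set u \<subseteq> {1..n} \<times> {1..n}" "i \<in> {1..n}" "j \<in> {1..n}"
  shows "rho_word n u (Rop n i j f) = Rop n i j (rho_word n u f)"
  using assms(1)
proof (induction u)
  case Nil then show ?case by simp
next
  case (Cons x u)
  obtain k l where x: "x = (k,l)" by (cases x)
  with Cons have "k \<in> {1..n}" "l \<in> {1..n}" by auto
  with Cons x show ?case using assms(2,3) by (simp add: rho_Rop)
qed

lemma cconst_add: "cconst (a + b) = cconst a + cconst b"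
  by (simp add: cconst_def single_add)

lemma cconst_mult: "cconst (a * b) = cconst a * cconst b"
  by (simp add: cconst_def mult_single)

lemma cconst_zero[simp]: "cconst 0 = 0" by (simp add: cconst_def)
lemma cconst_one[simp]: "cconst 1 = 1" by (simp add: cconst_def)

lemma tau_add: "tau n (P + Q) f = tau n P f + tau n Q f"
  unfolding tau_def
  by (rule setsum_keys_plus_distrib[where f="\<lambda>u a. cconst a * rho_word n u f"])
     (simp_all add: cconst_add distrib_right)

lemma tau_single: "tau n (Poly_Mapping.single u c) f = cconst c * rho_word n u f"
  by (cases "c = 0") (simp_all add: tau_def)

lemma tau_add_f: "tau n P (f + g) = tau n P f + tau n P g"
  by (simp add: tau_def rho_word_add distrib_left sum.distrib)

lemma tau_cconst_f: "tau n P (cconst c * f) = cconst c * tau n P f"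
  unfolding tau_def rho_word_cconst sum_distrib_left by (rule sum.cong) (simp_all add: mult_ac)

lemma tau_zero_f: "tau n P 0 = 0"
  using additive_zero[of "tau n P", OF tau_add_f] .

lemma tau_zero_P: "tau n 0 f = 0"
  by (simp add: tau_def)

lemma fmul_eq: "fmul p q = p * q"
proof -
  have "fmul p q = (\<Sum>u\<in>Poly_Mapping.keys p. \<Sum>w\<in>Poly_Mapping.keys q.
       Poly_Mapping.single u (Poly_Mapping.lookup p u) * Poly_Mapping.single w (Poly_Mapping.lookup q w))"
    by (simp add: fmul_def mult_single plus_list_def)
  also have "\<dots> = (\<Sum>u\<in>Poly_Mapping.keys p. Poly_Mapping.single u (Poly_Mapping.lookup p u)) *
      (\<Sum>w\<in>Poly_Mapping.keys q. Poly_Mapping.single w (Poly_Mapping.lookup q w))"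
    by (simp add: sum_product)
  also have "\<dots> = p * q" by (simp flip: poly_expand)
  finally show ?thesis .
qed

lemma tau_mult_single:
  "tau n (Poly_Mapping.single u a * Q) f = cconst a * rho_word n u (tau n Q f)"
proof -
  have "(\<lambda>Q. tau n (Poly_Mapping.single u a * Q) f) Q = (\<lambda>Q. cconst a * rho_word n u (tau n Q f)) Q"
  proof (rule additive_eq[of "\<lambda>Q. tau n (Poly_Mapping.single u a * Q) f" "\<lambda>Q. cconst a * rho_word n u (tau n Q f)"])
    show "tau n (Poly_Mapping.single u a * (x + y)) f = tau n (Poly_Mapping.single u a * x) f + tau n (Poly_Mapping.single u a * y) f" for x y
      by (simp add: distrib_left tau_add)
    show "cconst a * rho_word n u (tau n (x + y) f) = cconst a * rho_word n u (tau n x f) + cconst a * rho_word n u (tau n y f)" for x y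
      by (simp add: tau_add rho_word_add distrib_left)
    show "tau n (Poly_Mapping.single u a * Poly_Mapping.single k c) f = cconst a * rho_word n u (tau n (Poly_Mapping.single k c) f)" for k c
      by (simp add: mult_single tau_single plus_list_def rho_word_append rho_word_cconst cconst_mult mult_ac)
  qed
  then show ?thesis by simp
qed

lemma tau_mult: "tau n (P * Q) f = tau n P (tau n Q f)"
proof -
  have "(\<lambda>P. tau n (P * Q) f) P = (\<lambda>P. tau n P (tau n Q f)) P"
  proof (rule additive_eq[of "\<lambda>P. tau n (P * Q) f" "\<lambda>P. tau n P (tau n Q f)"])
    show "tau n ((x + y) * Q) f = tau n (x * Q) f + tau n (y * Q) f" for x y
      by (simp add: distrib_right tau_add)
    show "tau n (x + y) (tau n Q f) = tau n x (tau n Q f) + tau n y (tau n Q f)" for x y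
      by (simp add: tau_add)
    show "tau n (Poly_Mapping.single k c * Q) f = tau n (Poly_Mapping.single k c) (tau n Q f)" for k c
      by (simp add: tau_mult_single tau_single)
  qed
  then show ?thesis by simp
qed

lemma tau_E: "tau n (E i j) f = rho n i j f"
  by (simp add: E_def tau_single)

lemma tau_uminus: "tau n (- P) f = - tau n P f"
  using tau_add[of n P "- P" f] by (simp add: tau_zero_P eq_neg_iff_add_eq_0 add.commute)

lemma tau_diff: "tau n (P - Q) f = tau n P f - tau n Q f"
  using tau_add[of n P "- Q" f] by (simp add: tau_uminus)

lemma tau_Rop:
  assumes "P \<in> Fr n" "i \<in> {1..n}" "j \<in> {1..n}"
  shows "tau n P (Rop n i j f) = Rop n i j (tau n P f)"
proof -
  have "tau n P (Rop n i j f) = (\<Sum>u\<in>Poly_Mapping.keys P. Rop n i j (cconst (Poly_Mapping.lookup P u) * rho_word n u f))"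
    unfolding tau_def
    by (rule sum.cong) (use assms in \<open>auto simp: Fr_def rho_word_Rop Rop_cconst\<close>)
  also have "\<dots> = Rop n i j (tau n P f)"
    unfolding tau_def by (rule additive_sum[symmetric]) (rule Rop_add)
  finally show ?thesis .
qed

lemma tau_glrel:
  assumes "i \<in> {1..n}" "j \<in> {1..n}" "k \<in> {1..n}" "l \<in> {1..n}"
  shows "tau n (glrel i j k l) h = 0"
  using rho_rho[OF assms, of h]
  by (simp add: glrel_def fmul_eq tau_diff tau_mult tau_E tau_single kdelta_def)

lemma tau_UIdeal: "p \<in> UIdeal n \<Longrightarrow> tau n p f = 0"
proof (induction p arbitrary: f rule: UIdeal.induct)
  case zero then show ?case by (simp add: tau_zero_P)
next
  case (add p q) then show ?case by (simp add: tau_add)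
next
  case (gen a b i j k l)
  then show ?case by (simp add: fmul_eq tau_mult tau_glrel tau_zero_f)
qed

lemma Koszul_comm:
  assumes "P \<in> Fr n" "i \<in> {1..n}" "j \<in> {1..n}"
  shows "Koszul n (E i j * P - P * E i j) = Dl n i j (Koszul n P) - Dr n j i (Koszul n P)"
proof -
  have "Koszul n (P * E i j) = tau n P (Rop n i j 1)"
    by (simp add: Koszul_def tau_mult tau_E rho_one Rop_one)
  also have "\<dots> = Rop n i j (Koszul n P)"
    using assms by (simp add: tau_Rop Koszul_def)
  finally have "Koszul n (P * E i j) = X i j * Koszul n P + Dr n j i (Koszul n P)"
    by (simp add: Rop_def)
  moreover have "Koszul n (E i j * P) = Dl n i j (Koszul n P) + X i j * Koszul n P"
    by (simp add: Koszul_def tau_mult tau_E rho_def)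
  ultimately show ?thesis by (simp add: Koszul_def tau_diff)
qed

definition goodm :: "nat \<Rightarrow> ((nat \<times> nat) \<Rightarrow>\<^sub>0 nat) \<Rightarrow> bool" where
  "goodm n m \<longleftrightarrow> Poly_Mapping.keys m \<subseteq> {1..n} \<times> {1..n}"

lemma CM_iff: "p \<in> CM n \<longleftrightarrow> (\<forall>m. Poly_Mapping.lookup p m \<noteq> 0 \<longrightarrow> goodm n m)"
  by (auto simp: CM_def in_keys_iff goodm_def)

lemma CM_zero: "0 \<in> CM n" by (simp add: CM_iff)
lemma CM_one: "1 \<in> CM n" by (simp add: CM_iff lookup_one when_def goodm_def)

lemma CM_add: assumes "p \<in> CM n" "q \<in> CM n" shows "p + q \<in> CM n"
  unfolding CM_iff
proof (intro allI impI)
  fix m assume "Poly_Mapping.lookup (p + q) m \<noteq> 0"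
  then have "Poly_Mapping.lookup p m \<noteq> 0 \<or> Poly_Mapping.lookup q m \<noteq> 0" by (auto simp: lookup_add)
  then show "goodm n m" using assms unfolding CM_iff by blast
qed

lemma CM_uminus: "p \<in> CM n \<Longrightarrow> - p \<in> CM n"
  unfolding CM_iff by simp

lemma CM_diff: "p \<in> CM n \<Longrightarrow> q \<in> CM n \<Longrightarrow> p - q \<in> CM n"
  using CM_add[of p n "- q"] CM_uminus[of q n] by simp

lemma CM_sum: "(\<And>a. a \<in> A \<Longrightarrow> g a \<in> CM n) \<Longrightarrow> sum g A \<in> CM n"
proof (induction A rule: infinite_finite_induct)
  case (infinite A) then show ?case by (simp add: CM_zero)
next
  case empty then show ?case by (simp add: CM_zero)
next
  case (insert x F) then show ?case by (simp add: CM_add)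
qed

lemma CM_cconst: "p \<in> CM n \<Longrightarrow> cconst c * p \<in> CM n"
  unfolding CM_iff lookup_cconst_mult by simp

lemma keys_diff_ev: "Poly_Mapping.keys m \<subseteq> insert v (Poly_Mapping.keys (m - ev v))"
proof
  fix x assume "x \<in> Poly_Mapping.keys m"
  then show "x \<in> insert v (Poly_Mapping.keys (m - ev v))"
    by (cases "x = v") (auto simp: in_keys_iff lookup_minus_nat lookup_ev)
qed

lemma keys_add_ev: "Poly_Mapping.keys m \<subseteq> Poly_Mapping.keys (m + ev v)"
  by (auto simp: in_keys_iff lookup_add)

lemma goodm_diff: "goodm n (m - ev (a,b)) \<Longrightarrow> a \<in> {1..n} \<Longrightarrow> b \<in> {1..n} \<Longrightarrow> goodm n m"
  unfolding goodm_def using keys_diff_ev[of m "(a,b)"] by blast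

lemma goodm_add: "goodm n (m + ev v) \<Longrightarrow> goodm n m"
  unfolding goodm_def using keys_add_ev[of m v] by blast

lemma CM_X: assumes "p \<in> CM n" "a \<in> {1..n}" "b \<in> {1..n}" shows "X a b * p \<in> CM n"
  unfolding CM_iff lookup_X_mult
proof (intro allI impI)
  fix m assume h: "(if 0 < Poly_Mapping.lookup m (a, b) then Poly_Mapping.lookup p (m - ev (a, b)) else 0) \<noteq> 0"
  then have "Poly_Mapping.lookup p (m - ev (a, b)) \<noteq> 0" by (simp split: if_splits)
  then have "goodm n (m - ev (a,b))" using assms(1) unfolding CM_iff by blast
  then show "goodm n m" using goodm_diff assms(2,3) by blast
qed

lemma CM_pd: assumes "p \<in> CM n" shows "pd v p \<in> CM n"
  unfolding CM_iff lookup_pd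
proof (intro allI impI)
  fix m assume "of_nat (Poly_Mapping.lookup m v + 1) * Poly_Mapping.lookup p (m + ev v) \<noteq> 0"
  then have "Poly_Mapping.lookup p (m + ev v) \<noteq> 0" by auto
  then have "goodm n (m + ev v)" using assms unfolding CM_iff by blast
  then show "goodm n m" by (rule goodm_add)
qed

lemma CM_Dl: "p \<in> CM n \<Longrightarrow> i \<in> {1..n} \<Longrightarrow> Dl n i j p \<in> CM n"
  unfolding Dl_def by (rule CM_sum) (simp add: CM_X CM_pd)

lemma CM_rho: "p \<in> CM n \<Longrightarrow> i \<in> {1..n} \<Longrightarrow> j \<in> {1..n} \<Longrightarrow> rho n i j p \<in> CM n"
  unfolding rho_def by (simp add: CM_add CM_Dl CM_X)

lemma CM_rho_word: "p \<in> CM n \<Longrightarrow> set u \<subseteq> {1..n} \<times> {1..n} \<Longrightarrow> rho_word n u p \<in> CM n"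
  by (induction u) (auto simp: CM_rho)

lemma CM_tau: "P \<in> Fr n \<Longrightarrow> f \<in> CM n \<Longrightarrow> tau n P f \<in> CM n"
  unfolding tau_def
proof (rule CM_sum)
  fix u assume "u \<in> Poly_Mapping.keys P" "P \<in> Fr n" "f \<in> CM n"
  then have "set u \<subseteq> {1..n} \<times> {1..n}" unfolding Fr_def by blast
  then show "cconst (Poly_Mapping.lookup P u) * rho_word n u f \<in> CM n"
    using \<open>f \<in> CM n\<close> by (intro CM_cconst CM_rho_word)
qed

lemma CM_Koszul: "P \<in> Fr n \<Longrightarrow> Koszul n P \<in> CM n"
  by (simp add: Koszul_def CM_tau CM_one)

section \<open>Degrees\<close>

definition tdeg :: "((nat \<times> nat) \<Rightarrow>\<^sub>0 nat) \<Rightarrow> nat" where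
  "tdeg m = sum (Poly_Mapping.lookup m) (Poly_Mapping.keys m)"

lemma tdeg_superset: "finite S \<Longrightarrow> Poly_Mapping.keys m \<subseteq> S \<Longrightarrow> tdeg m = sum (Poly_Mapping.lookup m) S"
  unfolding tdeg_def by (rule sum.mono_neutral_left) (auto simp: in_keys_iff)

lemma tdeg_add: "tdeg (a + b) = tdeg a + tdeg b"
proof -
  let ?S = "Poly_Mapping.keys a \<union> Poly_Mapping.keys b"
  have "tdeg (a + b) = sum (Poly_Mapping.lookup (a + b)) ?S"
    by (rule tdeg_superset) (auto simp: in_keys_iff lookup_add)
  also have "\<dots> = sum (Poly_Mapping.lookup a) ?S + sum (Poly_Mapping.lookup b) ?S"
    by (simp add: lookup_add sum.distrib)
  also have "\<dots> = tdeg a + tdeg b"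
    by (simp add: tdeg_superset[of ?S a] tdeg_superset[of ?S b])
  finally show ?thesis .
qed

lemma tdeg_ev: "tdeg (ev v) = 1"
  by (simp add: tdeg_def ev_def)

lemma tdeg_zero[simp]: "tdeg 0 = 0"
  by (simp add: tdeg_def)

definition Low :: "nat \<Rightarrow> cpoly set" where
  "Low d = {p. \<forall>m. Poly_Mapping.lookup p m \<noteq> 0 \<longrightarrow> tdeg m < d}"

lemma LowI: "(\<And>m. Poly_Mapping.lookup p m \<noteq> 0 \<Longrightarrow> tdeg m < d) \<Longrightarrow> p \<in> Low d"
  by (simp add: Low_def)

lemma LowD: "p \<in> Low d \<Longrightarrow> Poly_Mapping.lookup p m \<noteq> 0 \<Longrightarrow> tdeg m < d"
  by (simp add: Low_def)

lemma LowD0: "p \<in> Low d \<Longrightarrow> d \<le> tdeg m \<Longrightarrow> Poly_Mapping.lookup p m = 0"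
  using LowD[of p d m] by force

lemma Low_zero: "0 \<in> Low d" by (simp add: Low_def)

lemma Low_add: assumes "p \<in> Low d" "q \<in> Low d" shows "p + q \<in> Low d"
proof (rule LowI)
  fix m assume "Poly_Mapping.lookup (p + q) m \<noteq> 0"
  then have "Poly_Mapping.lookup p m \<noteq> 0 \<or> Poly_Mapping.lookup q m \<noteq> 0" by (auto simp: lookup_add)
  then show "tdeg m < d" using assms LowD by blast
qed

lemma Low_uminus: "p \<in> Low d \<Longrightarrow> - p \<in> Low d"
  by (simp add: Low_def)

lemma Low_diff: "p \<in> Low d \<Longrightarrow> q \<in> Low d \<Longrightarrow> p - q \<in> Low d"
  using Low_add[of p d "- q"] Low_uminus[of q d] by simp

lemma Low_sum: "(\<And>a. a \<in> A \<Longrightarrow> g a \<in> Low d) \<Longrightarrow> sum g A \<in> Low d"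
proof (induction A rule: infinite_finite_induct)
  case (infinite A) then show ?case by (simp add: Low_zero)
next
  case empty then show ?case by (simp add: Low_zero)
next
  case (insert x F) then show ?case by (simp add: Low_add)
qed

lemma Low_cconst: "p \<in> Low d \<Longrightarrow> cconst c * p \<in> Low d"
  by (simp add: Low_def lookup_cconst_mult)

lemma Low_mono: "p \<in> Low d \<Longrightarrow> d \<le> d' \<Longrightarrow> p \<in> Low d'"
  by (auto simp: Low_def)

lemma tdeg_diff_ev: "0 < Poly_Mapping.lookup m v \<Longrightarrow> tdeg m = tdeg (m - ev v) + 1"
  using tdeg_add[of "m - ev v" "ev v"] by (simp add: mono_diff_add tdeg_ev)

lemma Low_X: assumes "p \<in> Low d" shows "X a b * p \<in> Low (Suc d)"
proof (rule LowI)
  fix m assume h: "Poly_Mapping.lookup (X a b * p) m \<noteq> 0"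
  then have m: "0 < Poly_Mapping.lookup m (a,b)" and "Poly_Mapping.lookup p (m - ev (a,b)) \<noteq> 0"
    by (simp_all add: lookup_X_mult split: if_splits)
  then have "tdeg (m - ev (a,b)) < d" using assms LowD by blast
  then show "tdeg m < Suc d" using tdeg_diff_ev[OF m] by simp
qed

lemma Low_pd: assumes "p \<in> Low (Suc d)" shows "pd v p \<in> Low d"
proof (rule LowI)
  fix m assume "Poly_Mapping.lookup (pd v p) m \<noteq> 0"
  then have "Poly_Mapping.lookup p (m + ev v) \<noteq> 0" by (simp add: lookup_pd)
  then have "tdeg (m + ev v) < Suc d" using assms LowD by blast
  then show "tdeg m < d" by (simp add: tdeg_add tdeg_ev)
qed

lemma Low_Dl: "p \<in> Low (Suc d) \<Longrightarrow> Dl n i j p \<in> Low (Suc d)"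
  unfolding Dl_def by (rule Low_sum) (intro Low_X Low_pd)

fun mon :: "(nat \<times> nat) list \<Rightarrow> (nat \<times> nat) \<Rightarrow>\<^sub>0 nat" where
  "mon [] = 0"
| "mon (x # u) = ev x + mon u"

lemma tdeg_mon: "tdeg (mon u) = length u"
  by (induction u) (simp_all add: tdeg_add tdeg_ev)

lemma Low_single: "tdeg m < d \<Longrightarrow> Poly_Mapping.single m c \<in> Low d"
  by (auto simp: Low_def lookup_single when_def)

lemma X_single: "X a b * Poly_Mapping.single m c = Poly_Mapping.single (ev (a,b) + m) c"
  by (simp add: X_def mult_single ev_def)

lemma rho_word_lead:
  "rho_word n u 1 - Poly_Mapping.single (mon u) 1 \<in> Low (length u)"
proof (induction u)
  case Nil then show ?case by (simp add: Low_zero)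
next
  case (Cons x u)
  obtain a b where x: "x = (a,b)" by (cases x)
  define r where "r = rho_word n u 1 - Poly_Mapping.single (mon u) 1"
  have r: "r \<in> Low (length u)" using Cons r_def by simp
  have e: "rho_word n u 1 = Poly_Mapping.single (mon u) 1 + r" by (simp add: r_def)
  have s: "Poly_Mapping.single (mon u) 1 + r \<in> Low (Suc (length u))"
    by (intro Low_add Low_single Low_mono[OF r]) (simp_all add: tdeg_mon)
  have "rho_word n (x # u) 1 - Poly_Mapping.single (mon (x # u)) 1
      = Dl n a b (Poly_Mapping.single (mon u) 1 + r) + X a b * r"
    by (simp add: x e rho_def distrib_left X_single)
  also have "\<dots> \<in> Low (Suc (length u))"
    by (intro Low_add Low_Dl s Low_X r)
  finally show ?case by simp
qed

lemma Low_rho_word: "rho_word n u 1 \<in> Low (Suc (length u))"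
proof -
  have "rho_word n u 1 = (rho_word n u 1 - Poly_Mapping.single (mon u) 1) + Poly_Mapping.single (mon u) 1" by simp
  also have "\<dots> \<in> Low (Suc (length u))"
    by (intro Low_add Low_mono[OF rho_word_lead] Low_single) (simp_all add: tdeg_mon)
  finally show ?thesis .
qed

lemma lookup_rho_word_top:
  "tdeg m = length u \<Longrightarrow> Poly_Mapping.lookup (rho_word n u 1) m = (if m = mon u then 1 else 0)"
proof -
  assume h: "tdeg m = length u"
  have "Poly_Mapping.lookup (rho_word n u 1 - Poly_Mapping.single (mon u) 1) m = 0"
    using LowD0[OF rho_word_lead] h by simp
  then show ?thesis by (simp add: lookup_minus lookup_single when_def)
qed

section \<open>Injectivity on sorted combinations\<close>

lemma lookup_mon: "Poly_Mapping.lookup (mon u) x = count (mset u) x"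
  by (induction u) (auto simp: lookup_add lookup_ev)

lemma mon_sorted_inj:
  assumes "mon u = mon w" "sorted u" "sorted w"
  shows "u = w"
proof -
  have "mset w = mset u"
    by (rule multiset_eqI) (simp add: lookup_mon[symmetric] assms(1))
  then have "sort u = w" using assms(3) by (rule properties_for_sort)
  then show ?thesis using sorted_sort_id[OF assms(2)] by simp
qed

lemma Koszul_expand: "Koszul n Q = (\<Sum>u\<in>Poly_Mapping.keys Q. cconst (Poly_Mapping.lookup Q u) * rho_word n u 1)"
  by (simp add: Koszul_def tau_def)

lemma Koszul_inj:
  assumes sorted: "\<forall>u\<in>Poly_Mapping.keys Q. sorted u" and K: "Koszul n Q = 0"
  shows "Q = 0"
proof (rule ccontr)
  assume "Q \<noteq> 0"
  then have ne: "Poly_Mapping.keys Q \<noteq> {}" by simp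
  define d where "d = Max (length ` Poly_Mapping.keys Q)"
  have "d \<in> length ` Poly_Mapping.keys Q" unfolding d_def using ne by (intro Max_in) auto
  then obtain u0 where u0: "u0 \<in> Poly_Mapping.keys Q" "length u0 = d" by auto
  have le: "length u \<le> d" if "u \<in> Poly_Mapping.keys Q" for u
    unfolding d_def using that by (intro Max_ge) auto
  have tm_eq: "Poly_Mapping.lookup Q u * Poly_Mapping.lookup (rho_word n u 1) (mon u0)
      = (if u = u0 then Poly_Mapping.lookup Q u else 0)" if u: "u \<in> Poly_Mapping.keys Q" for u
  proof (cases "length u = d")
    case True
    have "Poly_Mapping.lookup (rho_word n u 1) (mon u0) = (if mon u0 = mon u then 1 else 0)"
      by (rule lookup_rho_word_top) (simp add: tdeg_mon True u0)
    moreover have "(mon u0 = mon u) = (u = u0)"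
      using mon_sorted_inj[of u0 u] sorted u u0 by auto
    ultimately show ?thesis by simp
  next
    case False
    then have "length u < d" using le[OF u] by simp
    then have "rho_word n u 1 \<in> Low d" by (intro Low_mono[OF Low_rho_word]) simp
    then have "Poly_Mapping.lookup (rho_word n u 1) (mon u0) = 0"
      by (rule LowD0) (simp add: tdeg_mon u0)
    moreover have "u \<noteq> u0" using False u0 by auto
    ultimately show ?thesis by simp
  qed
  have "Poly_Mapping.lookup (Koszul n Q) (mon u0)
      = (\<Sum>u\<in>Poly_Mapping.keys Q. Poly_Mapping.lookup Q u * Poly_Mapping.lookup (rho_word n u 1) (mon u0))"
    by (simp add: Koszul_expand lookup_sum lookup_cconst_mult)
  also have "\<dots> = (\<Sum>u\<in>Poly_Mapping.keys Q. (if u = u0 then Poly_Mapping.lookup Q u else 0))"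
    by (rule sum.cong) (simp_all add: tm_eq)
  also have "\<dots> = Poly_Mapping.lookup Q u0" using u0 by simp
  finally have "Poly_Mapping.lookup Q u0 = 0" using K by simp
  then show False using u0 by (simp add: in_keys_iff)
qed

section \<open>Surjectivity\<close>

lemma Fr_iff: "P \<in> Fr n \<longleftrightarrow> (\<forall>u\<in>Poly_Mapping.keys P. set u \<subseteq> {1..n} \<times> {1..n})"
  by (simp add: Fr_def)

lemma Fr_zero: "0 \<in> Fr n" by (simp add: Fr_iff)

lemma Fr_add: "P \<in> Fr n \<Longrightarrow> Q \<in> Fr n \<Longrightarrow> P + Q \<in> Fr n"
  unfolding Fr_iff using keys_add[of P Q] by blast

lemma Fr_uminus: "P \<in> Fr n \<Longrightarrow> - P \<in> Fr n"
  unfolding Fr_iff by simp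

lemma Fr_diff: "P \<in> Fr n \<Longrightarrow> Q \<in> Fr n \<Longrightarrow> P - Q \<in> Fr n"
  using Fr_add[of P n "- Q"] Fr_uminus[of Q n] by simp

lemma Fr_sum: "(\<And>a. a \<in> A \<Longrightarrow> g a \<in> Fr n) \<Longrightarrow> sum g A \<in> Fr n"
proof (induction A rule: infinite_finite_induct)
  case (infinite A) then show ?case by (simp add: Fr_zero)
next
  case empty then show ?case by (simp add: Fr_zero)
next
  case (insert x F) then show ?case by (simp add: Fr_add)
qed

lemma Fr_single: "set u \<subseteq> {1..n} \<times> {1..n} \<Longrightarrow> Poly_Mapping.single u c \<in> Fr n"
  by (simp add: Fr_iff)

lemma Fr_mult: assumes "P \<in> Fr n" "Q \<in> Fr n" shows "P * Q \<in> Fr n"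
  unfolding Fr_iff
proof
  fix w assume "w \<in> Poly_Mapping.keys (P * Q)"
  then obtain a b where "w = a + b" "a \<in> Poly_Mapping.keys P" "b \<in> Poly_Mapping.keys Q"
    using keys_mult[of P Q] by blast
  then show "set w \<subseteq> {1..n} \<times> {1..n}" using assms by (auto simp: Fr_iff plus_list_def)
qed

lemma Fr_E: "i \<in> {1..n} \<Longrightarrow> j \<in> {1..n} \<Longrightarrow> E i j \<in> Fr n"
  by (simp add: E_def Fr_single)

lemma exists_word:
  "goodm n m \<Longrightarrow> \<exists>u. mon u = m \<and> set u \<subseteq> {1..n} \<times> {1..n}"
proof (induction "tdeg m" arbitrary: m rule: less_induct)
  case less
  show ?case
  proof (cases "m = 0")
    case True then show ?thesis by (intro exI[of _ "[]"]) simp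
  next
    case False
    then have "Poly_Mapping.keys m \<noteq> {}" by simp
    then obtain v where v: "v \<in> Poly_Mapping.keys m" by blast
    then have pos: "0 < Poly_Mapping.lookup m v" by (simp add: in_keys_iff)
    have "Poly_Mapping.keys (m - ev v) \<subseteq> Poly_Mapping.keys m"
      by (auto simp: in_keys_iff lookup_minus_nat)
    then have g: "goodm n (m - ev v)"
      using less.prems unfolding goodm_def by blast
    have "tdeg (m - ev v) < tdeg m" using tdeg_diff_ev[OF pos] by simp
    then obtain u where u: "mon u = m - ev v" "set u \<subseteq> {1..n} \<times> {1..n}"
      using less.hyps g by blast
    have "mon (v # u) = m" using u mono_diff_add[OF pos] by (simp add: add.commute)
    moreover have "v \<in> {1..n} \<times> {1..n}" using less.prems v unfolding goodm_def by blast
    ultimately show ?thesis using u by (intro exI[of _ "v # u"]) simp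
  qed
qed

lemma Koszul_add: "Koszul n (P + Q) = Koszul n P + Koszul n Q"
  by (simp add: Koszul_def tau_add)

lemma Koszul_sum: "Koszul n (sum g A) = (\<Sum>a\<in>A. Koszul n (g a))"
  by (rule additive_sum) (rule Koszul_add)

lemma Koszul_single: "Koszul n (Poly_Mapping.single u c) = cconst c * rho_word n u 1"
  by (simp add: Koszul_def tau_single)

lemma Koszul_surj_Low:
  "p \<in> CM n \<Longrightarrow> p \<in> Low d \<Longrightarrow> \<exists>P\<in>Fr n. Koszul n P = p"
proof (induction d arbitrary: p)
  case 0
  then have "p = 0" by (intro poly_mapping_eqI) (auto simp: Low_def)
  then show ?case by (intro bexI[of _ 0]) (simp_all add: Koszul_def tau_zero_P Fr_zero)
next
  case (Suc d)
  define T where "T = {m \<in> Poly_Mapping.keys p. tdeg m = d}"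
  define wd where "wd m = (SOME u. mon u = m \<and> set u \<subseteq> {1..n} \<times> {1..n})" for m
  have wd: "mon (wd m) = m \<and> set (wd m) \<subseteq> {1..n} \<times> {1..n}" if "m \<in> T" for m
  proof -
    have "goodm n m" using that Suc.prems(1) unfolding T_def CM_iff by (auto simp: in_keys_iff)
    from exists_word[OF this] show ?thesis unfolding wd_def by (rule someI_ex)
  qed
  have len: "length (wd m) = d" if "m \<in> T" for m
    using wd[OF that] tdeg_mon[of "wd m"] that unfolding T_def by simp
  define P1 where "P1 = (\<Sum>m\<in>T. Poly_Mapping.single (wd m) (Poly_Mapping.lookup p m))"
  have P1: "P1 \<in> Fr n" unfolding P1_def by (rule Fr_sum, rule Fr_single) (use wd in blast)
  have KP1: "Koszul n P1 = (\<Sum>m\<in>T. cconst (Poly_Mapping.lookup p m) * rho_word n (wd m) 1)"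
    by (simp add: P1_def Koszul_sum Koszul_single)
  have finT: "finite T" unfolding T_def by simp
  define D where "D = p - Koszul n P1"
  have DCM: "D \<in> CM n" unfolding D_def using Suc.prems(1) CM_Koszul[OF P1] by (rule CM_diff)
  have KLow: "Koszul n P1 \<in> Low (Suc d)"
    unfolding KP1 by (rule Low_sum) (metis Low_cconst Low_rho_word len)
  have DLow1: "D \<in> Low (Suc d)" unfolding D_def using Suc.prems(2) KLow by (rule Low_diff)
  have DLow: "D \<in> Low d"
  proof (rule LowI)
    fix m assume nz: "Poly_Mapping.lookup D m \<noteq> 0"
    have "tdeg m < Suc d" using LowD[OF DLow1 nz] .
    moreover have "tdeg m \<noteq> d"
    proof
      assume tm: "tdeg m = d"
      have "Poly_Mapping.lookup (Koszul n P1) m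
          = (\<Sum>m'\<in>T. Poly_Mapping.lookup p m' * Poly_Mapping.lookup (rho_word n (wd m') 1) m)"
        by (simp add: KP1 lookup_sum lookup_cconst_mult)
      also have "\<dots> = (\<Sum>m'\<in>T. if m' = m then Poly_Mapping.lookup p m' else 0)"
      proof (rule sum.cong)
        fix m' assume "m' \<in> T"
        then show "Poly_Mapping.lookup p m' * Poly_Mapping.lookup (rho_word n (wd m') 1) m = (if m' = m then Poly_Mapping.lookup p m' else 0)"
          using lookup_rho_word_top[of m "wd m'" n] len wd tm by auto
      qed simp
      also have "\<dots> = Poly_Mapping.lookup p m"
        using finT tm by (auto simp: T_def in_keys_iff)
      finally have "Poly_Mapping.lookup D m = 0" by (simp add: D_def lookup_minus)
      then show False using nz by simp
    qed
    ultimately show "tdeg m < d" by simp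
  qed
  obtain P2 where P2: "P2 \<in> Fr n" "Koszul n P2 = D" using Suc.IH[OF DCM DLow] by blast
  show ?case
    by (intro bexI[of _ "P1 + P2"]) (simp_all add: Koszul_add P2 D_def Fr_add P1)
qed

lemma Low_exists: "\<exists>d. p \<in> Low d"
proof
  show "p \<in> Low (Suc (Max (tdeg ` Poly_Mapping.keys p)))"
  proof (rule LowI)
    fix m assume "Poly_Mapping.lookup p m \<noteq> 0"
    then have "tdeg m \<le> Max (tdeg ` Poly_Mapping.keys p)" by (intro Max_ge) (auto simp: in_keys_iff)
    then show "tdeg m < Suc (Max (tdeg ` Poly_Mapping.keys p))" by simp
  qed
qed

lemma Koszul_surj: "p \<in> CM n \<Longrightarrow> \<exists>P\<in>Fr n. Koszul n P = p"
  using Low_exists[of p] Koszul_surj_Low by blast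

section \<open>The ideal\<close>

lemma single_nil_mult: "Poly_Mapping.single [] c * Poly_Mapping.single u d = Poly_Mapping.single u (c * d)"
  by (simp add: mult_single plus_list_def)

lemma UI_lmult: "p \<in> UIdeal n \<Longrightarrow> c \<in> Fr n \<Longrightarrow> c * p \<in> UIdeal n"
proof (induction p rule: UIdeal.induct)
  case zero then show ?case by (simp add: UIdeal.zero)
next
  case (add p q) then show ?case by (simp add: distrib_left UIdeal.add)
next
  case (gen a b i j k l)
  have "fmul (c * a) (fmul (glrel i j k l) b) \<in> UIdeal n"
    using gen by (intro UIdeal.gen Fr_mult) auto
  then show ?case by (simp add: fmul_eq mult.assoc)
qed

lemma UI_rmult: "p \<in> UIdeal n \<Longrightarrow> c \<in> Fr n \<Longrightarrow> p * c \<in> UIdeal n"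
proof (induction p rule: UIdeal.induct)
  case zero then show ?case by (simp add: UIdeal.zero)
next
  case (add p q) then show ?case by (simp add: distrib_right UIdeal.add)
next
  case (gen a b i j k l)
  have "fmul a (fmul (glrel i j k l) (b * c)) \<in> UIdeal n"
    using gen by (intro UIdeal.gen Fr_mult) auto
  then show ?case by (simp add: fmul_eq mult.assoc)
qed

lemma Fr_nil: "Poly_Mapping.single [] c \<in> Fr n"
  by (simp add: Fr_single)

lemma UI_uminus: "p \<in> UIdeal n \<Longrightarrow> - p \<in> UIdeal n"
proof -
  assume "p \<in> UIdeal n"
  then have "Poly_Mapping.single [] (-1) * p \<in> UIdeal n" by (rule UI_lmult) (rule Fr_nil)
  moreover have "Poly_Mapping.single ([]::(nat\<times>nat) list) (-1::complex) = -1"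
    by (simp add: zero_list_def[symmetric] single_uminus)
  ultimately show ?thesis by simp
qed

lemma UI_diff: "p \<in> UIdeal n \<Longrightarrow> q \<in> UIdeal n \<Longrightarrow> p - q \<in> UIdeal n"
  using UIdeal.add[of p n "- q"] UI_uminus[of q n] by simp

lemma UI_sum: "(\<And>a. a \<in> A \<Longrightarrow> g a \<in> UIdeal n) \<Longrightarrow> sum g A \<in> UIdeal n"
proof (induction A rule: infinite_finite_induct)
  case (infinite A) then show ?case by (simp add: UIdeal.zero)
next
  case empty then show ?case by (simp add: UIdeal.zero)
next
  case (insert x F) then show ?case by (simp add: UIdeal.add)
qed

definition SC :: "nat \<Rightarrow> fword set" where
  "SC n = {S \<in> Fr n. \<forall>u\<in>Poly_Mapping.keys S. sorted u}"

lemma SC_zero: "0 \<in> SC n" by (simp add: SC_def Fr_zero)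

lemma SC_add: assumes "S \<in> SC n" "T \<in> SC n" shows "S + T \<in> SC n"
  using assms keys_add[of S T] by (auto simp: SC_def Fr_add)

lemma SC_uminus: "S \<in> SC n \<Longrightarrow> - S \<in> SC n"
  by (auto simp: SC_def Fr_uminus)

lemma SC_diff: "S \<in> SC n \<Longrightarrow> T \<in> SC n \<Longrightarrow> S - T \<in> SC n"
  using SC_add[of S n "- T"] SC_uminus[of T n] by simp

lemma SC_sum: "(\<And>a. a \<in> A \<Longrightarrow> g a \<in> SC n) \<Longrightarrow> sum g A \<in> SC n"
proof (induction A rule: infinite_finite_induct)
  case (infinite A) then show ?case by (simp add: SC_zero)
next
  case empty then show ?case by (simp add: SC_zero)
next
  case (insert x F) then show ?case by (simp add: SC_add)
qed

lemma SC_nil_mult: assumes "S \<in> SC n" shows "Poly_Mapping.single [] c * S \<in> SC n"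
proof -
  have "Poly_Mapping.keys (Poly_Mapping.single [] c * S) \<subseteq> Poly_Mapping.keys S"
    using keys_mult[of "Poly_Mapping.single [] c" S] by (auto simp: plus_list_def split: if_splits)
  then show ?thesis using assms Fr_mult[OF Fr_nil, of S n c] by (auto simp: SC_def)
qed

lemma SC_single: "sorted u \<Longrightarrow> set u \<subseteq> {1..n} \<times> {1..n} \<Longrightarrow> Poly_Mapping.single u c \<in> SC n"
  by (simp add: SC_def Fr_single)

fun ninv :: "(nat \<times> nat) list \<Rightarrow> nat" where
  "ninv [] = 0"
| "ninv (x # u) = length (filter (\<lambda>y. y < x) u) + ninv u"

lemma ninv_swap: "y < x \<Longrightarrow> ninv (a @ y # x # b) < ninv (a @ x # y # b)"
proof (induction a)
  case Nil then show ?case by simp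
next
  case (Cons z a)
  have "length (filter (\<lambda>w. w < z) (a @ y # x # b)) = length (filter (\<lambda>w. w < z) (a @ x # y # b))"
    by simp
  with Cons show ?case by simp
qed

lemma unsorted_split: "\<not> sorted u \<Longrightarrow> \<exists>a x y b. u = a @ x # y # b \<and> y < x"
proof (induction u)
  case Nil then show ?case by simp
next
  case (Cons z u)
  show ?case
  proof (cases "sorted u")
    case True
    then obtain y w where u: "u = y # w" "y < z"
      using Cons.prems by (cases u) (auto simp: not_le)
    then show ?thesis by (intro exI[of _ "[]"]) auto
  next
    case False
    then obtain a x y b where "u = a @ x # y # b" "y < x" using Cons.IH by blast
    then show ?thesis by (intro exI[of _ "z # a"]) auto
  qed
qed

lemma glrel_expand:
  "Poly_Mapping.single a 1 * (glrel i j k l * Poly_Mapping.single b 1)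
   = Poly_Mapping.single (a @ (i,j) # (k,l) # b) 1 - Poly_Mapping.single (a @ (k,l) # (i,j) # b) 1
     - (Poly_Mapping.single [] (kdelta j k) * Poly_Mapping.single (a @ (i,l) # b) 1
        - Poly_Mapping.single [] (kdelta l i) * Poly_Mapping.single (a @ (k,j) # b) 1)"
  by (simp add: glrel_def fmul_eq E_def mult_single plus_list_def algebra_simps single_nil_mult)

lemma word_reduce_aux:
  assumes IH: "\<And>w. length w < L \<Longrightarrow> set w \<subseteq> {1..n} \<times> {1..n} \<Longrightarrow>
                 \<exists>S\<in>SC n. Poly_Mapping.single w 1 - S \<in> UIdeal n"
  shows "length u = L \<Longrightarrow> set u \<subseteq> {1..n} \<times> {1..n} \<Longrightarrow>
           \<exists>S\<in>SC n. Poly_Mapping.single u 1 - S \<in> UIdeal n"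
proof (induction "ninv u" arbitrary: u rule: less_induct)
  case less
  show ?case
  proof (cases "sorted u")
    case True
    then show ?thesis using less.prems
      by (intro bexI[of _ "Poly_Mapping.single u 1"]) (simp_all add: UIdeal.zero SC_single)
  next
    case False
    then obtain a x y b where u: "u = a @ x # y # b" "y < x" using unsorted_split by blast
    obtain i j where x: "x = (i,j)" by (cases x)
    obtain k l where y: "y = (k,l)" by (cases y)
    let ?R = "{1..n} \<times> {1..n}"
    have ra: "set a \<subseteq> ?R" and rb: "set b \<subseteq> ?R" and ri: "i \<in> {1..n}" and rj: "j \<in> {1..n}"
      and rk: "k \<in> {1..n}" and rl: "l \<in> {1..n}"
      using less.prems(2) u x y by auto
    define u' where "u' = a @ y # x # b"
    define w1 where "w1 = a @ (i,l) # b"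
    define w2 where "w2 = a @ (k,j) # b"
    have "ninv u' < ninv u" unfolding u'_def u(1) by (rule ninv_swap) (rule u(2))
    moreover have "length u' = L" "set u' \<subseteq> ?R" using less.prems u by (auto simp: u'_def)
    ultimately obtain S' where S': "S' \<in> SC n" "Poly_Mapping.single u' 1 - S' \<in> UIdeal n"
      using less.hyps by blast
    have "length w1 < L" "set w1 \<subseteq> ?R" using less.prems u ra rb ri rl by (auto simp: w1_def)
    then obtain S1 where S1: "S1 \<in> SC n" "Poly_Mapping.single w1 1 - S1 \<in> UIdeal n" using IH by blast
    have "length w2 < L" "set w2 \<subseteq> ?R" using less.prems u ra rb rk rj by (auto simp: w2_def)
    then obtain S2 where S2: "S2 \<in> SC n" "Poly_Mapping.single w2 1 - S2 \<in> UIdeal n" using IH by blast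
    define c1 where "c1 = Poly_Mapping.single ([]::(nat\<times>nat) list) (kdelta j k)"
    define c2 where "c2 = Poly_Mapping.single ([]::(nat\<times>nat) list) (kdelta l i)"
    define G where "G = Poly_Mapping.single a 1 * (glrel i j k l * Poly_Mapping.single b 1)"
    have G: "G \<in> UIdeal n"
    proof -
      have "fmul (Poly_Mapping.single a 1) (fmul (glrel i j k l) (Poly_Mapping.single b 1)) \<in> UIdeal n"
        using ra rb ri rj rk rl by (intro UIdeal.gen Fr_single) auto
      then show ?thesis by (simp add: G_def fmul_eq)
    qed
    have Geq: "G = Poly_Mapping.single u 1 - Poly_Mapping.single u' 1 - (c1 * Poly_Mapping.single w1 1 - c2 * Poly_Mapping.single w2 1)"
      unfolding G_def glrel_expand u'_def w1_def w2_def c1_def c2_def u x y by simp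
    define S where "S = S' + c1 * S1 - c2 * S2"
    have "S \<in> SC n" unfolding S_def c1_def c2_def
      by (intro SC_diff SC_add SC_nil_mult S' S1 S2)
    moreover have eq: "Poly_Mapping.single u 1 - S = G + (Poly_Mapping.single u' 1 - S')
        + c1 * (Poly_Mapping.single w1 1 - S1) - c2 * (Poly_Mapping.single w2 1 - S2)"
      by (simp add: Geq S_def algebra_simps)
    moreover have mem: "G + (Poly_Mapping.single u' 1 - S')
        + c1 * (Poly_Mapping.single w1 1 - S1) - c2 * (Poly_Mapping.single w2 1 - S2) \<in> UIdeal n"
      by (intro UI_diff UIdeal.add G S'(2) UI_lmult S1(2) S2(2)) (simp_all add: c1_def c2_def Fr_nil)
    ultimately show ?thesis by (intro bexI[of _ S]) (simp only: eq mem)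
  qed
qed

lemma word_reduce:
  "set u \<subseteq> {1..n} \<times> {1..n} \<Longrightarrow> \<exists>S\<in>SC n. Poly_Mapping.single u 1 - S \<in> UIdeal n"
proof (induction "length u" arbitrary: u rule: less_induct)
  case less
  show ?case by (rule word_reduce_aux[OF less.hyps refl less.prems]) auto
qed

lemma reduce:
  assumes "P \<in> Fr n"
  shows "\<exists>S\<in>SC n. P - S \<in> UIdeal n"
proof -
  define Sw where "Sw u = (SOME S. S \<in> SC n \<and> Poly_Mapping.single u 1 - S \<in> UIdeal n)" for u
  have Sw: "Sw u \<in> SC n \<and> Poly_Mapping.single u 1 - Sw u \<in> UIdeal n" if "u \<in> Poly_Mapping.keys P" for u
  proof -
    have "set u \<subseteq> {1..n} \<times> {1..n}" using assms that by (simp add: Fr_iff)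
    from word_reduce[OF this] have "\<exists>S. S \<in> SC n \<and> Poly_Mapping.single u 1 - S \<in> UIdeal n" by blast
    then show ?thesis unfolding Sw_def by (rule someI_ex)
  qed
  define S where "S = (\<Sum>u\<in>Poly_Mapping.keys P. Poly_Mapping.single [] (Poly_Mapping.lookup P u) * Sw u)"
  have "S \<in> SC n" unfolding S_def by (intro SC_sum SC_nil_mult) (use Sw in blast)
  moreover have "P - S = (\<Sum>u\<in>Poly_Mapping.keys P. Poly_Mapping.single [] (Poly_Mapping.lookup P u) * (Poly_Mapping.single u 1 - Sw u))"
  proof -
    let ?A = "(\<Sum>u\<in>Poly_Mapping.keys P. Poly_Mapping.single [] (Poly_Mapping.lookup P u) * Poly_Mapping.single u 1)"
    have Pe: "P = ?A"
    proof -
      have "P = (\<Sum>u\<in>Poly_Mapping.keys P. Poly_Mapping.single u (Poly_Mapping.lookup P u))"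
        by (rule poly_expand)
      also have "\<dots> = ?A" by (simp add: single_nil_mult)
      finally show ?thesis .
    qed
    have "P - S = ?A - S" using Pe by (rule arg_cong[where f="\<lambda>x. x - S"])
    also have "\<dots> = (\<Sum>u\<in>Poly_Mapping.keys P. Poly_Mapping.single [] (Poly_Mapping.lookup P u) * (Poly_Mapping.single u 1 - Sw u))"
      by (simp add: S_def right_diff_distrib sum_subtractf)
    finally show ?thesis .
  qed
  moreover have "(\<Sum>u\<in>Poly_Mapping.keys P. Poly_Mapping.single [] (Poly_Mapping.lookup P u) * (Poly_Mapping.single u 1 - Sw u)) \<in> UIdeal n"
    by (intro UI_sum UI_lmult Fr_nil) (use Sw in blast)
  ultimately show ?thesis by (intro bexI[of _ S]) simp_all
qed

theorem mainTheorem14: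
  fixes n :: nat
  shows "Koszul n ` Center n = Inv n"
proof
  show "Koszul n ` Center n \<subseteq> Inv n"
  proof
    fix p assume "p \<in> Koszul n ` Center n"
    then obtain P where P: "P \<in> Center n" "p = Koszul n P" by blast
    have PF: "P \<in> Fr n" using P by (simp add: Center_def)
    have "Dl n i j p - Dr n j i p = 0" if "i \<in> {1..n}" "j \<in> {1..n}" for i j
    proof -
      have "fmul (E i j) P - fmul P (E i j) \<in> UIdeal n" using P that by (simp add: Center_def)
      then have "Koszul n (E i j * P - P * E i j) = 0" by (simp add: fmul_eq Koszul_def tau_UIdeal)
      then show ?thesis using Koszul_comm[OF PF that] P by simp
    qed
    then show "p \<in> Inv n" using CM_Koszul[OF PF] P by (simp add: Inv_def)
  qed
next
  show "Inv n \<subseteq> Koszul n ` Center n"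
  proof
    fix p assume p: "p \<in> Inv n"
    then have pCM: "p \<in> CM n" by (simp add: Inv_def)
    obtain P0 where P0: "P0 \<in> Fr n" "Koszul n P0 = p" using Koszul_surj[OF pCM] by blast
    obtain S where S: "S \<in> SC n" "P0 - S \<in> UIdeal n" using reduce[OF P0(1)] by blast
    have SF: "S \<in> Fr n" using S by (simp add: SC_def)
    have KS: "Koszul n S = p"
    proof -
      have "Koszul n (P0 - S) = 0" using S(2) by (simp add: Koszul_def tau_UIdeal)
      then show ?thesis using P0 by (simp add: Koszul_def tau_diff)
    qed
    have "fmul (E i j) S - fmul S (E i j) \<in> UIdeal n" if ij: "i \<in> {1..n}" "j \<in> {1..n}" for i j
    proof -
      define Q where "Q = E i j * S - S * E i j"
      have QF: "Q \<in> Fr n" unfolding Q_def using SF Fr_E[OF ij] by (intro Fr_diff Fr_mult)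
      have KQ: "Koszul n Q = 0"
        using Koszul_comm[OF SF ij] KS p ij unfolding Q_def by (simp add: Inv_def)
      obtain T where T: "T \<in> SC n" "Q - T \<in> UIdeal n" using reduce[OF QF] by blast
      have "Koszul n (Q - T) = 0" using T(2) by (simp add: Koszul_def tau_UIdeal)
      then have "Koszul n T = 0" using KQ by (simp add: Koszul_def tau_diff)
      then have "T = 0" using T(1) by (intro Koszul_inj) (auto simp: SC_def)
      then show ?thesis using T(2) by (simp add: Q_def fmul_eq)
    qed
    then have "S \<in> Center n" using SF by (simp add: Center_def)
    then show "p \<in> Koszul n ` Center n" using KS by blast
  qed
qed

end
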